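(* For every $n\ge 1$ and every Boolean function $f:\{0,1\}^n \to \{0,1\}$, \[ \deg_{1/3}(f)^2 \geq \sqrt{\tfrac{6}{101}}\; bs(f). \]
   Context: A real polynomial $p$ on $\mathbb{R}^n$ is an $\varepsilon$-approximation of $f:\{0,1\}^n\to\{0,1\}$ if $|f(x)-p(x)|\le\varepsilon$ for all $x\in\{0,1\}^n$; $\deg_{1/3}(f)$ is the minimum degree of a $\tfrac13$-approximation of $f$. For $x\in\{0,1\}^n$ and $R\subseteq\{1,\dots,n\}$, $x^{(R)}$ is $x$ with the bits indexed by $R$ flipped. The local block sensitivity $bs(f,x)$ is the largest $t$ such that there exist pairwise disjoint $R_1,\dots,R_t\subseteq\{1,\dots,n\}$ with $f(x)\ne f(x^{(R_i)})$ for all $i$; $bs(f)=\max_x bs(f,x)$. *)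

theory Defs
  imports Complex_Main
begin

text \<open>Points of the Boolean cube {0,1}^n are represented as subsets x of {0..<n}
  (x = set of coordinates equal to 1). A Boolean function is f :: nat set => bool,
  only its values on Pow {0..<n} matter. Flipping the bits in R is symmetric difference.\<close>

definition cube :: "nat \<Rightarrow> nat set set" where
  "cube n = Pow {0..<n}"

definition flip :: "nat set \<Rightarrow> nat set \<Rightarrow> nat set" where
  "flip x R = (x - R) \<union> (R - x)"

definition embed :: "nat set \<Rightarrow> nat \<Rightarrow> real" where
  "embed x = (\<lambda>i. if i \<in> x then 1 else 0)"

definition exps :: "nat \<Rightarrow> nat \<Rightarrow> (nat \<Rightarrow> nat) set" where
  "exps n d = {\<alpha>. (\<forall>i. n \<le> i \<longrightarrow> \<alpha> i = 0) \<and> (\<Sum>i<n. \<alpha> i) \<le> d}"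

text \<open>p is a real polynomial on R^n of degree at most d (points of R^n are
  functions nat => real, of which only coordinates < n are used).\<close>
definition poly_deg_le :: "nat \<Rightarrow> nat \<Rightarrow> ((nat \<Rightarrow> real) \<Rightarrow> real) \<Rightarrow> bool" where
  "poly_deg_le n d p \<longleftrightarrow> (\<exists>c :: (nat \<Rightarrow> nat) \<Rightarrow> real.
      \<forall>x. p x = (\<Sum>\<alpha>\<in>exps n d. c \<alpha> * (\<Prod>i<n. x i ^ \<alpha> i)))"

definition approximates :: "nat \<Rightarrow> real \<Rightarrow> (nat set \<Rightarrow> bool) \<Rightarrow> ((nat \<Rightarrow> real) \<Rightarrow> real) \<Rightarrow> bool" where
  "approximates n \<epsilon> f p \<longleftrightarrow> (\<forall>x\<in>cube n. \<bar>of_bool (f x) - p (embed x)\<bar> \<le> \<epsilon>)"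

definition approx_deg :: "nat \<Rightarrow> (nat set \<Rightarrow> bool) \<Rightarrow> nat" where
  "approx_deg n f = (LEAST d. \<exists>p. poly_deg_le n d p \<and> approximates n (1/3) f p)"

definition local_bs :: "nat \<Rightarrow> (nat set \<Rightarrow> bool) \<Rightarrow> nat set \<Rightarrow> nat" where
  "local_bs n f x = Max {t. \<exists>R :: nat \<Rightarrow> nat set.
      (\<forall>i<t. R i \<subseteq> {0..<n}) \<and>
      (\<forall>i<t. \<forall>j<t. i \<noteq> j \<longrightarrow> R i \<inter> R j = {}) \<and>
      (\<forall>i<t. f x \<noteq> f (flip x (R i)))}"

definition bs :: "nat \<Rightarrow> (nat set \<Rightarrow> bool) \<Rightarrow> nat" where
  "bs n f = Max (local_bs n f ` cube n)"

end

theory Submission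
  imports Defs "HOL-Analysis.Analysis" "HOL-Computational_Algebra.Polynomial"
begin

definition lag_num :: "(nat \<Rightarrow> real) \<Rightarrow> nat \<Rightarrow> nat \<Rightarrow> real poly" where
  "lag_num \<tau> d j = (\<Prod>k\<in>{..d}-{j}. [:- \<tau> k, 1:])"

definition lag_den :: "(nat \<Rightarrow> real) \<Rightarrow> nat \<Rightarrow> nat \<Rightarrow> real" where
  "lag_den \<tau> d j = (\<Prod>k\<in>{..d}-{j}. \<tau> j - \<tau> k)"

lemma poly_lag_num: "poly (lag_num \<tau> d j) y = (\<Prod>k\<in>{..d}-{j}. y - \<tau> k)"
  unfolding lag_num_def by (simp add: poly_prod)

lemma lag_den_nz: "inj_on \<tau> {..d} \<Longrightarrow> j \<le> d \<Longrightarrow> lag_den \<tau> d j \<noteq> 0"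
  unfolding lag_den_def by (auto simp: inj_on_def)

lemma degree_lag_num: "j \<le> d \<Longrightarrow> degree (lag_num \<tau> d j) \<le> d"
proof -
  assume j: "j \<le> d"
  have "degree (lag_num \<tau> d j) \<le> (\<Sum>k\<in>{..d}-{j}. degree [:- \<tau> k, 1:])"
    unfolding lag_num_def using degree_prod_sum_le[of "{..d}-{j}" "\<lambda>k. [:- \<tau> k, 1:]"]
    by (simp add: o_def)
  also have "\<dots> = card ({..d}-{j})" by simp
  also have "\<dots> = d" using j by simp
  finally show ?thesis .
qed

lemma interp:
  fixes P :: "real poly"
  assumes inj: "inj_on \<tau> {..d}" and deg: "degree P \<le> d"
  shows "P = (\<Sum>j\<le>d. smult (poly P (\<tau> j) / lag_den \<tau> d j) (lag_num \<tau> d j))"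
proof (rule poly_eqI_degree[where A="\<tau> ` {..d}"])
  fix y assume "y \<in> \<tau> ` {..d}"
  then obtain i where i: "i \<le> d" "y = \<tau> i" by auto
  have "poly (\<Sum>j\<le>d. smult (poly P (\<tau> j) / lag_den \<tau> d j) (lag_num \<tau> d j)) y
      = (\<Sum>j\<le>d. (if j = i then poly P y else 0))"
    unfolding poly_sum
  proof (rule sum.cong)
    fix j assume j: "j \<in> {..d}"
    show "poly (smult (poly P (\<tau> j) / lag_den \<tau> d j) (lag_num \<tau> d j)) y = (if j = i then poly P y else 0)"
    proof (cases "j = i")
      case True
      then show ?thesis using lag_den_nz[OF inj, of j] j i
        by (simp add: poly_lag_num lag_den_def)
    next
      case False
      then have "i \<in> {..d} - {j}" using i by auto
      then have "(\<Prod>k\<in>{..d}-{j}. y - \<tau> k) = 0" using i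
        by (intro prod_zero) auto
      then show ?thesis using False by (simp add: poly_lag_num)
    qed
  qed simp
  also have "\<dots> = poly P y" using i by simp
  finally show "poly P y = poly (\<Sum>j\<le>d. smult (poly P (\<tau> j) / lag_den \<tau> d j) (lag_num \<tau> d j)) y"
    by simp
next
  have "card (\<tau> ` {..d}) = Suc d" using inj by (simp add: card_image)
  then show "degree P < card (\<tau> ` {..d})" using deg by simp
  have "degree (\<Sum>j\<le>d. smult (poly P (\<tau> j) / lag_den \<tau> d j) (lag_num \<tau> d j)) \<le> d"
    by (intro degree_sum_le) (auto intro: order.trans[OF degree_smult_le] degree_lag_num)
  then show "degree (\<Sum>j\<le>d. smult (poly P (\<tau> j) / lag_den \<tau> d j) (lag_num \<tau> d j)) < card (\<tau> ` {..d})"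
    using \<open>card _ = _\<close> by simp
qed

definition lw :: "(nat \<Rightarrow> real) \<Rightarrow> nat \<Rightarrow> nat \<Rightarrow> real" where
  "lw \<tau> d j = coeff (lag_num \<tau> d j) 1 / lag_den \<tau> d j"

lemma interp_coeff1:
  fixes P :: "real poly"
  assumes inj: "inj_on \<tau> {..d}" and deg: "degree P \<le> d"
  shows "coeff P 1 = (\<Sum>j\<le>d. poly P (\<tau> j) * lw \<tau> d j)"
proof -
  have "coeff P 1 = coeff (\<Sum>j\<le>d. smult (poly P (\<tau> j) / lag_den \<tau> d j) (lag_num \<tau> d j)) 1"
    using interp[OF inj deg] by simp
  also have "\<dots> = (\<Sum>j\<le>d. poly P (\<tau> j) * lw \<tau> d j)"
    by (simp add: coeff_sum lw_def)
  finally show ?thesis .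
qed

lemma coeff_prod_linear:
  fixes a :: "nat \<Rightarrow> real"
  assumes "finite K"
  shows "coeff (\<Prod>k\<in>K. [:a k, 1:]) 0 = (\<Prod>k\<in>K. a k)"
    and "coeff (\<Prod>k\<in>K. [:a k, 1:]) 1 = (\<Sum>k\<in>K. \<Prod>l\<in>K-{k}. a l)"
proof -
  show c0: "coeff (\<Prod>k\<in>K. [:a k, 1:]) 0 = (\<Prod>k\<in>K. a k)"
    by (simp add: poly_0_coeff_0[symmetric] poly_prod)
  show "coeff (\<Prod>k\<in>K. [:a k, 1:]) 1 = (\<Sum>k\<in>K. \<Prod>l\<in>K-{k}. a l)"
    using assms
  proof (induction K rule: finite_induct)
    case (insert x F)
    have e: "(\<Prod>l\<in>insert x F - {k}. a l) = a x * (\<Prod>l\<in>F - {k}. a l)" if "k \<in> F" for k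
    proof -
      have "insert x F - {k} = insert x (F - {k})" using that insert by auto
      then show ?thesis using insert by simp
    qed
    have "coeff (\<Prod>k\<in>insert x F. [:a k, 1:]) 1 = a x * coeff (\<Prod>k\<in>F. [:a k, 1:]) 1 + coeff (\<Prod>k\<in>F. [:a k, 1:]) 0"
      using insert by simp
    also have "\<dots> = a x * (\<Sum>k\<in>F. \<Prod>l\<in>F-{k}. a l) + (\<Prod>k\<in>F. a k)"
      using insert by (simp add: poly_0_coeff_0[symmetric] poly_prod)
    also have "\<dots> = (\<Sum>k\<in>insert x F. \<Prod>l\<in>insert x F-{k}. a l)"
      using insert by (simp add: e sum_distrib_left)
    finally show ?case .
  qed simp
qed

fun cheb :: "nat \<Rightarrow> real poly" where
  "cheb 0 = 1"
| "cheb (Suc 0) = [:0, 1:]"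
| "cheb (Suc (Suc n)) = [:0, 2:] * cheb (Suc n) - cheb n"

lemma cheb_cos: "poly (cheb n) (cos t) = cos (real n * t)"
proof (induction n rule: cheb.induct)
  case (3 n)
  have "cos (real (Suc (Suc n)) * t) = cos ((real n + 1) * t + t)"
    by (simp add: algebra_simps)
  moreover have "cos (real n * t) = cos ((real n + 1) * t - t)"
    by (simp add: algebra_simps)
  ultimately have "cos (real (Suc (Suc n)) * t) = 2 * cos t * cos ((real n + 1) * t) - cos (real n * t)"
    by (simp only: cos_add cos_diff) (simp add: algebra_simps)
  then show ?case using 3 by (simp add: algebra_simps)
qed auto

lemma cheb_degree: "degree (cheb n) \<le> n"
proof (induction n rule: cheb.induct)
  case (3 n)
  have "degree ([:0, 2:] * cheb (Suc n)) \<le> Suc (Suc n)"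
    using degree_mult_le[of "[:0,2:]" "cheb (Suc n)"] 3 by simp
  moreover have "degree (cheb n) \<le> Suc (Suc n)" using 3 by simp
  ultimately show ?case by (simp add: degree_diff_le)
qed auto

lemma cheb_one: "poly (cheb n) 1 = 1"
  using cheb_cos[of n 0] by simp

lemma cheb_deriv_one: "poly (pderiv (cheb n)) 1 = real n ^ 2"
proof (induction n rule: cheb.induct)
  case (3 n)
  then show ?case by (simp add: pderiv_diff pderiv_pCons pderiv_smult cheb_one algebra_simps power2_eq_square)
qed (auto simp: pderiv_pCons)


lemma lw_sign:
  assumes mono: "\<And>j k. j < k \<Longrightarrow> k \<le> d \<Longrightarrow> \<tau> j < \<tau> k" and t0: "\<tau> 0 = 0"
    and j: "1 \<le> j" "j \<le> d"
  shows "(-1)^(j+1) * lw \<tau> d j \<ge> 0"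
proof -
  define K where "K = {1..d} - {j}"
  have fK: "finite K" by (simp add: K_def)
  have pos: "\<tau> k > 0" if "k \<in> K" for k using mono[of 0 k] that t0 by (auto simp: K_def)
  have cK: "card K = d - 1" using j by (simp add: K_def)
  have s1: "{..d} - {j} = insert 0 K" using j by (auto simp: K_def)
  have "lag_num \<tau> d j = [:0, 1:] * (\<Prod>k\<in>K. [:- \<tau> k, 1:])"
    unfolding lag_num_def s1 using t0 by (simp add: K_def)
  then have "coeff (lag_num \<tau> d j) 1 = coeff (\<Prod>k\<in>K. [:- \<tau> k, 1:]) 0" by simp
  also have "\<dots> = (\<Prod>k\<in>K. - \<tau> k)" using coeff_prod_linear(1)[OF fK, of "\<lambda>k. - \<tau> k"] by simp
  also have "\<dots> = (-1)^(d-1) * (\<Prod>k\<in>K. \<tau> k)" by (simp add: prod_uminus cK)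
  finally have num: "coeff (lag_num \<tau> d j) 1 = (-1)^(d-1) * (\<Prod>k\<in>K. \<tau> k)" .
  have N: "(\<Prod>k\<in>K. \<tau> k) > 0" using pos by (intro prod_pos) auto
  have s2: "{..d} - {j} = {..<j} \<union> {j<..d}" using j by auto
  have "lag_den \<tau> d j = (\<Prod>k\<in>{..<j}. \<tau> j - \<tau> k) * (\<Prod>k\<in>{j<..d}. \<tau> j - \<tau> k)"
    unfolding lag_den_def s2 by (rule prod.union_disjoint) auto
  also have "(\<Prod>k\<in>{j<..d}. \<tau> j - \<tau> k) = (\<Prod>k\<in>{j<..d}. - (\<tau> k - \<tau> j))" by simp
  also have "\<dots> = (-1)^(d-j) * (\<Prod>k\<in>{j<..d}. \<tau> k - \<tau> j)" by (simp only: prod_uminus) simp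
  finally have den: "lag_den \<tau> d j = (\<Prod>k\<in>{..<j}. \<tau> j - \<tau> k) * ((-1)^(d-j) * (\<Prod>k\<in>{j<..d}. \<tau> k - \<tau> j))" .
  have D1: "(\<Prod>k\<in>{..<j}. \<tau> j - \<tau> k) > 0" using mono j by (intro prod_pos) auto
  have D2: "(\<Prod>k\<in>{j<..d}. \<tau> k - \<tau> j) > 0" using mono j by (intro prod_pos) auto
  have sg: "(-1::real)^(j+1) * (-1)^(d-1) = (-1)^(d-j)"
  proof -
    have "(j+1)+(d-1) = (d-j) + 2*j" using j by simp
    then have "(-1::real)^(j+1) * (-1)^(d-1) = (-1)^((d-j) + 2*j)" by (metis power_add)
    also have "\<dots> = (-1)^(d-j)" by (simp add: power_add power_mult)
    finally show ?thesis .
  qed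
  have "(-1)^(j+1) * lw \<tau> d j = ((-1::real)^(j+1) * (-1)^(d-1)) * (\<Prod>k\<in>K. \<tau> k) /
        ((\<Prod>k\<in>{..<j}. \<tau> j - \<tau> k) * ((-1)^(d-j) * (\<Prod>k\<in>{j<..d}. \<tau> k - \<tau> j)))"
    unfolding lw_def num den by simp
  also have "\<dots> = (\<Prod>k\<in>K. \<tau> k) / ((\<Prod>k\<in>{..<j}. \<tau> j - \<tau> k) * (\<Prod>k\<in>{j<..d}. \<tau> k - \<tau> j))"
    unfolding sg by simp
  also have "\<dots> \<ge> 0" using N D1 D2 by simp
  finally show ?thesis .
qed

lemma lw_zero:
  assumes pos: "\<And>k. 1 \<le> k \<Longrightarrow> k \<le> d \<Longrightarrow> \<tau> k > 0" and t0: "\<tau> 0 = 0"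
  shows "lw \<tau> d 0 = - (\<Sum>k\<in>{1..d}. 1 / \<tau> k)"
proof -
  have s: "{..d} - {0} = {1..d}" by auto
  have fK: "finite {1..d}" by simp
  have "coeff (lag_num \<tau> d 0) 1 = (\<Sum>k\<in>{1..d}. \<Prod>l\<in>{1..d}-{k}. - \<tau> l)"
    unfolding lag_num_def s using coeff_prod_linear(2)[OF fK, of "\<lambda>k. - \<tau> k"] by simp
  moreover have "lag_den \<tau> d 0 = (\<Prod>k\<in>{1..d}. - \<tau> k)"
    unfolding lag_den_def s using t0 by simp
  moreover have "(\<Prod>l\<in>{1..d}-{k}. - \<tau> l) / (\<Prod>k\<in>{1..d}. - \<tau> k) = - (1 / \<tau> k)" if k: "k \<in> {1..d}" for k
  proof -
    have "(\<Prod>k\<in>{1..d}. - \<tau> k) = (- \<tau> k) * (\<Prod>l\<in>{1..d}-{k}. - \<tau> l)"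
      using k by (simp add: prod.remove)
    moreover have "(\<Prod>l\<in>{1..d}-{k}. - \<tau> l) \<noteq> 0" using pos by (auto simp: prod_zero_iff) (metis less_irrefl)
    moreover have "\<tau> k \<noteq> 0" using pos k by force
    ultimately show ?thesis by simp
  qed
  ultimately show ?thesis unfolding lw_def
    by (simp add: sum_divide_distrib sum_negf)
qed

definition tau :: "nat \<Rightarrow> nat \<Rightarrow> real" where
  "tau d j = (1 - cos (real j * pi / real d)) / 2"

lemma tau_mono:
  assumes "1 \<le> d" "j < k" "k \<le> d"
  shows "tau d j < tau d k"
proof -
  have dpos: "real d > 0" using assms by simp
  have "real j * pi / real d < real k * pi / real d"
    using assms dpos by (intro divide_strict_right_mono mult_strict_right_mono) auto
  moreover have "real k * pi / real d \<le> pi"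
    using assms dpos by (simp add: divide_le_eq)
  moreover have "0 \<le> real j * pi / real d" by simp
  ultimately have "cos (real k * pi / real d) < cos (real j * pi / real d)"
    by (subst cos_mono_less_eq) auto
  then show ?thesis unfolding tau_def by simp
qed

lemma tau0: "tau d 0 = 0" by (simp add: tau_def)

lemma tau_inj: "1 \<le> d \<Longrightarrow> inj_on (tau d) {..d}"
  by (rule inj_onI) (metis atMost_iff less_irrefl linorder_neq_iff tau_mono)

lemma tau_range: "0 \<le> tau d j \<and> tau d j \<le> 1"
  unfolding tau_def using cos_ge_minus_one[of "real j * pi / real d"] cos_le_one[of "real j * pi / real d"]
  by simp

lemma cheb_tau: "1 \<le> d \<Longrightarrow> poly (pcompose (cheb d) [:1, -2:]) (tau d j) = (-1)^j"
proof -
  assume d: "1 \<le> d"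
  have "poly (pcompose (cheb d) [:1, -2:]) (tau d j) = poly (cheb d) (cos (real j * pi / real d))"
  proof -
    have e: "\<And>x::real. 1 - (2 - x * 2) / 2 = x" by (simp add: field_simps)
    show ?thesis by (simp add: poly_pcompose tau_def e)
  qed
  also have "\<dots> = cos (real d * (real j * pi / real d))" by (rule cheb_cos)
  also have "real d * (real j * pi / real d) = real j * pi" using d by simp
  finally show ?thesis by simp
qed

lemma coeff1_deriv: "coeff (p :: real poly) 1 = poly (pderiv p) 0"
  by (simp add: poly_0_coeff_0 coeff_pderiv)

lemma cheb_tau_coeff: "coeff (pcompose (cheb d) [:1, -2:]) 1 = - 2 * real d ^ 2"
  unfolding coeff1_deriv pderiv_pcompose
  by (simp add: poly_pcompose cheb_deriv_one pderiv_pCons)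

lemma cheb_tau_degree: "degree (pcompose (cheb d) [:1, -2:]) \<le> d"
  using degree_pcompose_le[of "cheb d" "[:1, -2:]"] cheb_degree[of d] by simp

lemma one_minus_cos_le: "1 - cos (x::real) \<le> x^2 / 2"
proof -
  have "cos x = cos (2 * (x/2))" by simp
  also have "\<dots> = 1 - 2 * sin (x/2) ^ 2" by (rule cos_double_sin)
  finally have c: "1 - cos x = 2 * sin (x/2) ^ 2" by simp
  have "sin (x/2) ^ 2 = \<bar>sin (x/2)\<bar> ^ 2" by simp
  also have "\<dots> \<le> \<bar>x/2\<bar> ^ 2" by (intro power_mono abs_sin_x_le_abs_x) auto
  also have "\<dots> = x^2/4" by (simp add: power2_eq_square)
  finally show ?thesis using c by simp
qed

lemma inv_tau_bound:
  assumes "1 \<le> k" "k \<le> d"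
  shows "1 / tau d k \<ge> 4 * real d ^ 2 / (real k ^ 2 * pi ^ 2)"
proof -
  have tpos: "tau d k > 0" using tau_mono[of d 0 k] assms tau0[of d] by simp
  have "tau d k \<le> (real k * pi / real d)^2 / 4"
    using one_minus_cos_le[of "real k * pi / real d"] unfolding tau_def by simp
  also have "\<dots> = real k ^ 2 * pi ^ 2 / (4 * real d ^ 2)" by (simp add: power_divide power_mult_distrib)
  finally have le: "tau d k \<le> real k ^ 2 * pi ^ 2 / (4 * real d ^ 2)" .
  have "1 / (real k ^ 2 * pi ^ 2 / (4 * real d ^ 2)) \<le> 1 / tau d k"
    using le tpos assms by (intro divide_left_mono) (auto intro!: mult_pos_pos divide_pos_pos)
  then show ?thesis by simp
qed

lemma W_bound:
  assumes "1 \<le> d"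
  shows "(\<Sum>k\<in>{1..d}. 1 / tau d k) \<ge> real d ^ 2 / 2"
proof (cases "d = 1")
  case True
  then show ?thesis by (simp add: tau_def)
next
  case False
  then have d2: "2 \<le> d" using assms by simp
  have nn: "\<forall>k\<in>{1..d}. 0 \<le> 1 / tau d k" using tau_range by simp
  have "(\<Sum>k\<in>{1,2::nat}. 1 / tau d k) \<le> (\<Sum>k\<in>{1..d}. 1 / tau d k)"
    using d2 nn by (intro sum_mono2) auto
  moreover have "(\<Sum>k\<in>{1,2::nat}. 1 / tau d k) = 1 / tau d 1 + 1 / tau d 2" by simp
  moreover have "1 / tau d 1 \<ge> 4 * real d ^ 2 / pi ^ 2"
    using inv_tau_bound[of 1 d] d2 by simp
  moreover have "1 / tau d 2 \<ge> real d ^ 2 / pi ^ 2"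
    using inv_tau_bound[of 2 d] d2 by simp
  moreover have "5 * real d ^ 2 / pi ^ 2 \<ge> real d ^ 2 / 2"
  proof -
    have "pi ^ 2 \<le> 10"
    proof -
      have "pi \<le> 3.15" using pi_approx(2) by simp
      then have "pi * pi \<le> 3.15 * 3.15" by (intro mult_mono) auto
      then show ?thesis by (simp add: power2_eq_square)
    qed
    then have "real d ^ 2 * pi ^ 2 \<le> real d ^ 2 * 10" by (intro mult_left_mono) auto
    then show ?thesis using pi_gt_zero by (simp add: field_simps)
  qed
  ultimately show ?thesis by (simp add: add_divide_distrib[symmetric])
qed

lemma markov_refined:
  fixes R :: "real poly"
  assumes d: "1 \<le> d" "degree R \<le> d"
    and bnd: "\<And>t. 0 \<le> t \<Longrightarrow> t \<le> 1 \<Longrightarrow> -1/3 \<le> poly R t \<and> poly R t \<le> 4/3"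
  shows "coeff R 1 \<le> 5/3 * real d ^ 2 - (\<Sum>k\<in>{1..d}. 1 / tau d k) * (poly R 0 + 1/3)"
proof -
  define w where "w = lw (tau d) d"
  define W where "W = (\<Sum>k\<in>{1..d}. 1 / tau d k)"
  have inj: "inj_on (tau d) {..d}" using tau_inj d by simp
  have mono: "\<And>j k. j < k \<Longrightarrow> k \<le> d \<Longrightarrow> tau d j < tau d k" using tau_mono d by blast
  have split: "{..d} = insert 0 {1..d}" by auto
  have eR: "coeff R 1 = poly R 0 * w 0 + (\<Sum>j\<in>{1..d}. poly R (tau d j) * w j)"
    using interp_coeff1[OF inj d(2)] unfolding w_def split by (simp add: tau0)
  have e1: "0 = w 0 + (\<Sum>j\<in>{1..d}. w j)"
    using interp_coeff1[OF inj, of 1] unfolding w_def split by simp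
  have eT: "- 2 * real d ^ 2 = w 0 + (\<Sum>j\<in>{1..d}. (-1)^j * w j)"
    using interp_coeff1[OF inj cheb_tau_degree] cheb_tau_coeff[of d] unfolding w_def split
    by (simp add: cheb_tau[OF d(1)])
  have w0: "w 0 = - W" unfolding w_def W_def
    by (rule lw_zero) (use mono[of 0] tau0[of d] in auto)
  have tm: "poly R (tau d j) * w j \<le> w j / 2 + 5/6 * ((-1)^(j+1) * w j)" if j: "j \<in> {1..d}" for j
  proof -
    have sg: "(-1)^(j+1) * w j \<ge> 0" unfolding w_def
      by (rule lw_sign) (use mono tau0 j in auto)
    have b: "-1/3 \<le> poly R (tau d j)" "poly R (tau d j) \<le> 4/3" using bnd tau_range by auto
    show ?thesis
    proof (cases "even j")
      case True
      then have "- w j \<ge> 0" using sg by simp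
      then have "(1/2 - poly R (tau d j)) * (- w j) \<le> 5/6 * (- w j)"
        using b by (intro mult_right_mono) auto
      then show ?thesis using True by (simp add: algebra_simps)
    next
      case False
      then have "w j \<ge> 0" using sg by simp
      then have "(poly R (tau d j) - 1/2) * w j \<le> 5/6 * w j"
        using b by (intro mult_right_mono) auto
      then show ?thesis using False by (simp add: algebra_simps)
    qed
  qed
  have "(\<Sum>j\<in>{1..d}. poly R (tau d j) * w j) \<le> (\<Sum>j\<in>{1..d}. w j / 2 + 5/6 * ((-1)^(j+1) * w j))"
    by (rule sum_mono) (rule tm)
  also have "\<dots> = (\<Sum>j\<in>{1..d}. w j) / 2 - 5/6 * (\<Sum>j\<in>{1..d}. (-1)^j * w j)"
    by (simp add: sum.distrib sum_subtractf sum_divide_distrib sum_distrib_left sum_negf)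
  finally have "(\<Sum>j\<in>{1..d}. poly R (tau d j) * w j) \<le> (\<Sum>j\<in>{1..d}. w j) / 2 - 5/6 * (\<Sum>j\<in>{1..d}. (-1)^j * w j)" .
  then show ?thesis using eR e1 eT w0 unfolding W_def[symmetric] by (simp add: algebra_simps)
qed

lemma embed_flip:
  "embed (flip x V) i = (if i \<in> V then 1 - embed x i else embed x i)"
  by (auto simp: embed_def flip_def)

lemma block_mono:
  fixes Rs :: "nat \<Rightarrow> nat set" and x :: "nat set" and \<alpha> :: "nat \<Rightarrow> nat"
  assumes Rs: "\<And>j. j < b \<Longrightarrow> Rs j \<subseteq> {..<n}"
    and disj: "\<And>i j. i < b \<Longrightarrow> j < b \<Longrightarrow> i \<noteq> j \<Longrightarrow> Rs i \<inter> Rs j = {}"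
  shows "\<exists>M. degree M \<le> (\<Sum>i<n. \<alpha> i) \<and> (\<forall>t. poly M t = (\<Sum>S\<in>Pow {..<b}. t ^ card S * (1 - t) ^ (b - card S) *
            (\<Prod>i<n. embed (flip x (\<Union>j\<in>S. Rs j)) i ^ \<alpha> i)))"
proof -
  define ex where "ex = embed x"
  define U where "U = (\<Union>j\<in>{..<b}. Rs j)"
  define a where "a j = (\<Prod>i\<in>Rs j. ex i ^ \<alpha> i)" for j
  define e where "e j = (\<Prod>i\<in>Rs j. (1 - ex i) ^ \<alpha> i)" for j
  define C where "C = (\<Prod>i\<in>{..<n}-U. ex i ^ \<alpha> i)"
  have fR: "finite (Rs j)" if "j < b" for j using Rs[OF that] finite_subset by blast
  have U: "U \<subseteq> {..<n}" using Rs by (auto simp: U_def)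
  have claim1: "(\<Prod>i<n. embed (flip x (\<Union>j\<in>S. Rs j)) i ^ \<alpha> i) = C * (\<Prod>j<b. if j \<in> S then e j else a j)"
    if S: "S \<subseteq> {..<b}" for S
  proof -
    define z where "z i = embed (flip x (\<Union>j\<in>S. Rs j)) i" for i
    have "{..<n} = ({..<n} - U) \<union> U" using U by auto
    then have "(\<Prod>i<n. z i ^ \<alpha> i) = (\<Prod>i\<in>{..<n}-U. z i ^ \<alpha> i) * (\<Prod>i\<in>U. z i ^ \<alpha> i)"
      by (metis Diff_disjoint finite_Diff finite_lessThan finite_subset prod.union_disjoint U Int_commute)
    also have "(\<Prod>i\<in>{..<n}-U. z i ^ \<alpha> i) = C"
      unfolding C_def
    proof (rule prod.cong)
      fix i assume "i \<in> {..<n} - U"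
      then have "i \<notin> (\<Union>j\<in>S. Rs j)" using S by (auto simp: U_def)
      then show "z i ^ \<alpha> i = ex i ^ \<alpha> i" by (simp add: z_def embed_flip ex_def)
    qed simp
    also have "(\<Prod>i\<in>U. z i ^ \<alpha> i) = (\<Prod>j<b. \<Prod>i\<in>Rs j. z i ^ \<alpha> i)"
      unfolding U_def by (rule prod.UNION_disjoint) (use fR disj in auto)
    also have "\<dots> = (\<Prod>j<b. if j \<in> S then e j else a j)"
    proof (rule prod.cong)
      fix j assume j: "j \<in> {..<b}"
      have zi: "z i = (if j \<in> S then 1 - ex i else ex i)" if i: "i \<in> Rs j" for i
      proof -
        have "i \<in> (\<Union>j\<in>S. Rs j) \<longleftrightarrow> j \<in> S"
          using i j S disj by blast
        then show ?thesis by (simp add: z_def embed_flip ex_def)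
      qed
      show "(\<Prod>i\<in>Rs j. z i ^ \<alpha> i) = (if j \<in> S then e j else a j)"
        unfolding e_def a_def by (cases "j \<in> S") (auto intro!: prod.cong simp: zi)
    qed simp
    finally show ?thesis unfolding z_def by simp
  qed
  have claim2: "(\<Sum>S\<in>Pow {..<b}. t ^ card S * (1 - t) ^ (b - card S) * (C * (\<Prod>j<b. if j \<in> S then e j else a j)))
      = C * (\<Prod>j<b. t * e j + (1 - t) * a j)" for t :: real
  proof -
    have "(\<Prod>j<b. t * e j + (1 - t) * a j) = (\<Sum>S\<in>Pow {..<b}. (\<Prod>j\<in>S. t * e j) * (\<Prod>j\<in>{..<b}-S. (1 - t) * a j))"
      by (rule prod_add) simp
    also have "\<dots> = (\<Sum>S\<in>Pow {..<b}. t ^ card S * (1 - t) ^ (b - card S) * (\<Prod>j<b. if j \<in> S then e j else a j))"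
    proof (rule sum.cong)
      fix S assume "S \<in> Pow {..<b}"
      then have S: "S \<subseteq> {..<b}" by simp
      then have fS: "finite S" using finite_subset by blast
      have c: "card ({..<b} - S) = b - card S" using S fS by (simp add: card_Diff_subset)
      have i1: "{..<b} \<inter> S = S" using S by auto
      have i2: "{..<b} \<inter> - S = {..<b} - S" by auto
      have "(\<Prod>j<b. if j \<in> S then e j else a j) = (\<Prod>j\<in>S. e j) * (\<Prod>j\<in>{..<b}-S. a j)"
        by (simp add: prod.If_cases i1 i2)
      then show "(\<Prod>j\<in>S. t * e j) * (\<Prod>j\<in>{..<b}-S. (1 - t) * a j) =
          t ^ card S * (1 - t) ^ (b - card S) * (\<Prod>j<b. if j \<in> S then e j else a j)"
        by (simp add: prod.distrib c)
    qed simp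
    finally show ?thesis by (simp add: sum_distrib_left mult_ac)
  qed
  define M where "M = smult C (\<Prod>j<b. [:a j, e j - a j:])"
  have polyM: "poly M t = C * (\<Prod>j<b. t * e j + (1 - t) * a j)" for t
    unfolding M_def by (simp add: poly_prod algebra_simps)
  define supp where "supp = {i. \<alpha> i \<noteq> 0}"
  have degf: "degree [:a j, e j - a j:] \<le> (if Rs j \<inter> supp \<noteq> {} then 1 else 0)" for j
  proof (cases "Rs j \<inter> supp = {}")
    case True
    then have z: "\<alpha> i = 0" if "i \<in> Rs j" for i using that by (auto simp: supp_def)
    then have "a j = 1" "e j = 1" by (auto simp: a_def e_def intro!: prod.neutral)
    then show ?thesis by simp
  next
    case False
    then show ?thesis by simp
  qed
  have "degree M \<le> degree (\<Prod>j<b. [:a j, e j - a j:])" unfolding M_def by (rule degree_smult_le)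
  also have "\<dots> \<le> (\<Sum>j<b. degree [:a j, e j - a j:])"
    using degree_prod_sum_le[of "{..<b}" "\<lambda>j. [:a j, e j - a j:]"] by (simp add: o_def)
  also have "\<dots> \<le> (\<Sum>j<b. (if Rs j \<inter> supp \<noteq> {} then 1 else 0))"
    by (rule sum_mono) (rule degf)
  also have "\<dots> = card {j \<in> {..<b}. Rs j \<inter> supp \<noteq> {}}"
  proof -
    have "(\<Sum>j\<in>{j \<in> {..<b}. Rs j \<inter> supp \<noteq> {}}. (1::nat)) = (\<Sum>j<b. if Rs j \<inter> supp \<noteq> {} then 1 else 0)"
      by (rule sum.inter_filter) simp
    then show ?thesis by simp
  qed
  also have "\<dots> \<le> card (supp \<inter> {..<n})"
  proof -
    define g where "g j = (SOME i. i \<in> Rs j \<inter> supp)" for j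
    have g: "g j \<in> Rs j \<inter> supp" if "Rs j \<inter> supp \<noteq> {}" for j
      unfolding g_def using that by (metis all_not_in_conv someI_ex)
    have "inj_on g {j \<in> {..<b}. Rs j \<inter> supp \<noteq> {}}"
    proof (rule inj_onI)
      fix j k assume j: "j \<in> {j \<in> {..<b}. Rs j \<inter> supp \<noteq> {}}" and k: "k \<in> {j \<in> {..<b}. Rs j \<inter> supp \<noteq> {}}"
        and eq: "g j = g k"
      show "j = k"
      proof (rule ccontr)
        assume "j \<noteq> k"
        then have "Rs j \<inter> Rs k = {}" using disj j k by auto
        then show False using g[of j] g[of k] j k eq by auto
      qed
    qed
    moreover have "g ` {j \<in> {..<b}. Rs j \<inter> supp \<noteq> {}} \<subseteq> supp \<inter> {..<n}"
      using g Rs by blast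
    ultimately show ?thesis by (intro card_inj_on_le) auto
  qed
  also have "\<dots> = (\<Sum>i\<in>supp \<inter> {..<n}. 1)" by simp
  also have "\<dots> \<le> (\<Sum>i\<in>supp \<inter> {..<n}. \<alpha> i)"
    by (rule sum_mono) (auto simp: supp_def)
  also have "\<dots> \<le> (\<Sum>i<n. \<alpha> i)" by (rule sum_mono2) auto
  finally have degM: "degree M \<le> (\<Sum>i<n. \<alpha> i)" .
  show ?thesis
  proof (intro exI conjI allI)
    show "degree M \<le> (\<Sum>i<n. \<alpha> i)" by (rule degM)
    fix t :: real
    have "(\<Sum>S\<in>Pow {..<b}. t ^ card S * (1 - t) ^ (b - card S) * (\<Prod>i<n. embed (flip x (\<Union>j\<in>S. Rs j)) i ^ \<alpha> i))
        = (\<Sum>S\<in>Pow {..<b}. t ^ card S * (1 - t) ^ (b - card S) * (C * (\<Prod>j<b. if j \<in> S then e j else a j)))"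
      by (rule sum.cong) (auto simp: claim1)
    also have "\<dots> = poly M t" by (simp add: claim2 polyM)
    finally show "poly M t = (\<Sum>S\<in>Pow {..<b}. t ^ card S * (1 - t) ^ (b - card S) * (\<Prod>i<n. embed (flip x (\<Union>j\<in>S. Rs j)) i ^ \<alpha> i))"
      by simp
  qed
qed


lemma block_poly:
  fixes Rs :: "nat \<Rightarrow> nat set" and x :: "nat set" and p :: "(nat \<Rightarrow> real) \<Rightarrow> real"
  assumes Rs: "\<And>j. j < b \<Longrightarrow> Rs j \<subseteq> {..<n}"
    and disj: "\<And>i j. i < b \<Longrightarrow> j < b \<Longrightarrow> i \<noteq> j \<Longrightarrow> Rs i \<inter> Rs j = {}"
    and p: "\<And>y. p y = (\<Sum>\<alpha>\<in>E. c \<alpha> * (\<Prod>i<n. y i ^ \<alpha> i))"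
    and E: "\<And>\<alpha>. \<alpha> \<in> E \<Longrightarrow> (\<Sum>i<n. \<alpha> i) \<le> d"
  shows "\<exists>R. degree R \<le> d \<and> (\<forall>t. poly R t = (\<Sum>S\<in>Pow {..<b}. t ^ card S * (1 - t) ^ (b - card S) *
            p (embed (flip x (\<Union>j\<in>S. Rs j)))))"
proof -
  have ex: "\<forall>\<alpha>\<in>E. \<exists>M. degree M \<le> d \<and> (\<forall>t. poly M t = (\<Sum>S\<in>Pow {..<b}. t ^ card S * (1 - t) ^ (b - card S) *
            (\<Prod>i<n. embed (flip x (\<Union>j\<in>S. Rs j)) i ^ \<alpha> i)))"
  proof
    fix \<alpha> assume "\<alpha> \<in> E"
    obtain M where M: "degree M \<le> (\<Sum>i<n. \<alpha> i)" "\<forall>t. poly M t = (\<Sum>S\<in>Pow {..<b}. t ^ card S * (1 - t) ^ (b - card S) *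
            (\<Prod>i<n. embed (flip x (\<Union>j\<in>S. Rs j)) i ^ \<alpha> i))"
      using block_mono[of b Rs n \<alpha> x, OF Rs disj] by blast
    have "degree M \<le> d" using M(1) E[OF \<open>\<alpha> \<in> E\<close>] by linarith
    then show "\<exists>M. degree M \<le> d \<and> (\<forall>t. poly M t = (\<Sum>S\<in>Pow {..<b}. t ^ card S * (1 - t) ^ (b - card S) *
            (\<Prod>i<n. embed (flip x (\<Union>j\<in>S. Rs j)) i ^ \<alpha> i)))"
      using M(2) by blast
  qed
  obtain Mf where Mf: "\<And>\<alpha>. \<alpha> \<in> E \<Longrightarrow> degree (Mf \<alpha>) \<le> d \<and> (\<forall>t. poly (Mf \<alpha>) t = (\<Sum>S\<in>Pow {..<b}. t ^ card S * (1 - t) ^ (b - card S) *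
            (\<Prod>i<n. embed (flip x (\<Union>j\<in>S. Rs j)) i ^ \<alpha> i)))"
    using bchoice[OF ex] by blast
  define R where "R = (\<Sum>\<alpha>\<in>E. smult (c \<alpha>) (Mf \<alpha>))"
  have "degree R \<le> d"
  proof (cases "finite E")
    case True
    then show ?thesis unfolding R_def
      by (intro degree_sum_le) (auto intro: order.trans[OF degree_smult_le] simp: Mf)
  qed (simp add: R_def)
  moreover have "poly R t = (\<Sum>S\<in>Pow {..<b}. t ^ card S * (1 - t) ^ (b - card S) *
            p (embed (flip x (\<Union>j\<in>S. Rs j))))" for t
  proof -
    have "poly R t = (\<Sum>\<alpha>\<in>E. c \<alpha> * (\<Sum>S\<in>Pow {..<b}. t ^ card S * (1 - t) ^ (b - card S) *
            (\<Prod>i<n. embed (flip x (\<Union>j\<in>S. Rs j)) i ^ \<alpha> i)))"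
      unfolding R_def poly_sum by (intro sum.cong) (auto simp: Mf)
    also have "\<dots> = (\<Sum>\<alpha>\<in>E. \<Sum>S\<in>Pow {..<b}. t ^ card S * (1 - t) ^ (b - card S) *
            (c \<alpha> * (\<Prod>i<n. embed (flip x (\<Union>j\<in>S. Rs j)) i ^ \<alpha> i)))"
      by (simp add: sum_distrib_left mult_ac)
    also have "\<dots> = (\<Sum>S\<in>Pow {..<b}. \<Sum>\<alpha>\<in>E. t ^ card S * (1 - t) ^ (b - card S) *
            (c \<alpha> * (\<Prod>i<n. embed (flip x (\<Union>j\<in>S. Rs j)) i ^ \<alpha> i)))"
      by (rule sum.swap)
    also have "\<dots> = (\<Sum>S\<in>Pow {..<b}. t ^ card S * (1 - t) ^ (b - card S) *
            p (embed (flip x (\<Union>j\<in>S. Rs j))))"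
      by (simp add: p sum_distrib_left)
    finally show ?thesis .
  qed
  ultimately show ?thesis by blast
qed

lemma weights_sum:
  fixes t :: real
  shows "(\<Sum>S\<in>Pow {..<b}. t ^ card S * (1 - t) ^ (b - card S)) = 1"
proof -
  have "(\<Prod>j<b. t + (1 - t)) = (\<Sum>S\<in>Pow {..<b}. (\<Prod>j\<in>S. t) * (\<Prod>j\<in>{..<b}-S. 1 - t))"
    by (rule prod_add) simp
  also have "\<dots> = (\<Sum>S\<in>Pow {..<b}. t ^ card S * (1 - t) ^ (b - card S))"
  proof (rule sum.cong)
    fix S assume "S \<in> Pow {..<b}"
    then have S: "S \<subseteq> {..<b}" "finite S" using finite_subset by auto
    then show "(\<Prod>j\<in>S. t) * (\<Prod>j\<in>{..<b}-S. 1 - t) = t ^ card S * (1 - t) ^ (b - card S)"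
      by (simp add: card_Diff_subset)
  qed simp
  finally show ?thesis by simp
qed

lemma coeff_lin_pow: "coeff ([:1, -1:] ^ m :: real poly) 0 = 1 \<and> coeff ([:1, -1:] ^ m :: real poly) 1 = - real m"
proof (induction m)
  case (Suc m)
  have "[:1, -1:] ^ Suc m = [:1, -1:] * ([:1, -1:] ^ m :: real poly)" by simp
  also have "\<dots> = [:1, -1:] ^ m + pCons 0 (smult (-1) ([:1, -1:] ^ m))" by simp
  finally show ?case using Suc by (simp add: coeff_pCons)
qed simp

lemma sym_props:
  fixes Rs :: "nat \<Rightarrow> nat set" and x :: "nat set" and p :: "(nat \<Rightarrow> real) \<Rightarrow> real"
  assumes R: "\<And>t. poly R t = (\<Sum>S\<in>Pow {..<b}. t ^ card S * (1 - t) ^ (b - card S) * v S)"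
  shows "poly R 0 = v {}" and "coeff R 1 = (\<Sum>j<b. v {j}) - real b * v {}"
proof -
  have "poly R 0 = (\<Sum>S\<in>Pow {..<b}. (if S = {} then v S else 0))"
    unfolding R
  proof (rule sum.cong)
    fix S assume "S \<in> Pow {..<b}"
    then have "finite S" by (auto intro: finite_subset)
    then show "0 ^ card S * (1 - 0) ^ (b - card S) * v S = (if S = {} then v S else 0)"
      by (auto simp: power_0_left)
  qed simp
  also have "\<dots> = v {}" by (simp add: sum.delta')
  finally show "poly R 0 = v {}" .
  define Q where "Q = (\<Sum>S\<in>Pow {..<b}. smult (v S) (monom 1 (card S) * [:1, -1:] ^ (b - card S)))"
  have "poly Q t = poly R t" for t
    unfolding Q_def R poly_sum by (intro sum.cong) (auto simp: poly_monom poly_power)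
  then have "poly R = poly Q" by (intro ext) simp
  then have "R = Q" by (simp add: poly_eq_poly_eq_iff)
  then have "coeff R 1 = (\<Sum>S\<in>Pow {..<b}. v S * coeff (monom 1 (card S) * [:1, -1:] ^ (b - card S)) 1)"
    by (simp add: Q_def coeff_sum)
  also have "\<dots> = (\<Sum>S\<in>Pow {..<b}. (if S = {} then - real b * v S else 0) + (if card S = 1 then v S else 0))"
  proof (rule sum.cong)
    fix S assume "S \<in> Pow {..<b}"
    then have fS: "finite S" by (auto intro: finite_subset)
    show "v S * coeff (monom 1 (card S) * [:1, -1:] ^ (b - card S)) 1 =
       (if S = {} then - real b * v S else 0) + (if card S = 1 then v S else 0)"
    proof (cases "card S")
      case 0
      then show ?thesis using fS coeff_lin_pow[of b] by (simp add: coeff_monom_mult)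
    next
      case (Suc k)
      then have "S \<noteq> {}" by auto
      then show ?thesis using Suc coeff_lin_pow[of "b - card S"] by (cases k) (auto simp: coeff_monom_mult)
    qed
  qed simp
  also have "\<dots> = - real b * v {} + (\<Sum>S\<in>{S \<in> Pow {..<b}. card S = 1}. v S)"
  proof -
    have "(\<Sum>S\<in>{S \<in> Pow {..<b}. card S = 1}. v S) = (\<Sum>S\<in>Pow {..<b}. if card S = 1 then v S else 0)"
      by (rule sum.inter_filter) simp
    then show ?thesis by (simp add: sum.distrib sum.delta')
  qed
  also have "{S \<in> Pow {..<b}. card S = 1} = (\<lambda>j. {j}) ` {..<b}"
  proof (rule set_eqI, rule iffI)
    fix S assume "S \<in> {S \<in> Pow {..<b}. card S = 1}"
    then have S: "card S = 1" "S \<subseteq> {..<b}" by auto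
    then obtain j where "S = {j}" by (auto simp: card_1_singleton_iff)
    with S(2) have "S = {j}" "S \<subseteq> {..<b}" by auto
    then show "S \<in> (\<lambda>j. {j}) ` {..<b}" by auto
  qed auto
  also have "(\<Sum>S\<in>(\<lambda>j. {j}) ` {..<b}. v S) = (\<Sum>j<b. v {j})"
    by (subst sum.reindex) (auto simp: inj_on_def)
  finally show "coeff R 1 = (\<Sum>j<b. v {j}) - real b * v {}" by simp
qed


lemma exps_finite: "finite (exps n d)"
proof -
  have "exps n d \<subseteq> {\<alpha>. \<forall>i. (i \<in> {..<n} \<longrightarrow> \<alpha> i \<in> {..d}) \<and> (i \<notin> {..<n} \<longrightarrow> \<alpha> i = 0)}"
  proof
    fix \<alpha> assume a: "\<alpha> \<in> exps n d"
    have "\<alpha> i \<le> d" if "i < n" for i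
    proof -
      have "\<alpha> i \<le> (\<Sum>i<n. \<alpha> i)" using that by (intro member_le_sum) auto
      then show ?thesis using a by (auto simp: exps_def)
    qed
    then show "\<alpha> \<in> {\<alpha>. \<forall>i. (i \<in> {..<n} \<longrightarrow> \<alpha> i \<in> {..d}) \<and> (i \<notin> {..<n} \<longrightarrow> \<alpha> i = 0)}"
      using a by (auto simp: exps_def)
  qed
  moreover have "finite {\<alpha>. \<forall>i. (i \<in> {..<n} \<longrightarrow> \<alpha> i \<in> {..d}) \<and> (i \<notin> {..<n} \<longrightarrow> \<alpha> i = (0::nat))}"
    by (rule finite_set_of_finite_funs) auto
  ultimately show ?thesis by (rule finite_subset)
qed

lemma approx_exists: "\<exists>p. poly_deg_le n n p \<and> approximates n (1/3) f p"
proof -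
  define A where "A S i = (if i \<in> S then 0 else 1::real)" for S :: "nat set" and i
  define B where "B S i = (if i \<in> S then 1 else -1::real)" for S :: "nat set" and i
  define ind where "ind T i = (if i \<in> T then 1 else 0::nat)" for T :: "nat set" and i
  define coefT where "coefT T = (\<Sum>S\<in>Pow {..<n}. of_bool (f S) * ((\<Prod>i\<in>T. B S i) * (\<Prod>i\<in>{..<n}-T. A S i)))" for T
  define p where "p y = (\<Sum>S\<in>Pow {..<n}. of_bool (f S) * (\<Prod>i<n. A S i + B S i * y i))" for y :: "nat \<Rightarrow> real"
  define c where "c \<alpha> = (if \<alpha> \<in> ind ` Pow {..<n} then coefT {i. \<alpha> i = 1} else 0)" for \<alpha>
  have mono_ind: "(\<Prod>i\<in>T. y i) = (\<Prod>i<n. y i ^ ind T i)" if "T \<subseteq> {..<n}" for T and y :: "nat \<Rightarrow> real"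
  proof -
    have "(\<Prod>i\<in>{i \<in> {..<n}. i \<in> T}. y i) = (\<Prod>i<n. if i \<in> T then y i else 1)"
      by (rule prod.inter_filter) simp
    moreover have "{i \<in> {..<n}. i \<in> T} = T" using that by auto
    moreover have "(\<Prod>i<n. y i ^ ind T i) = (\<Prod>i<n. if i \<in> T then y i else 1)"
      by (rule prod.cong) (auto simp: ind_def)
    ultimately show ?thesis by simp
  qed
  have ind_exps: "ind T \<in> exps n n" if "T \<subseteq> {..<n}" for T
  proof -
    have "(\<Sum>i<n. ind T i) \<le> (\<Sum>i<n. 1)" by (rule sum_mono) (simp add: ind_def)
    then show ?thesis using that by (auto simp: exps_def ind_def)
  qed
  have inj: "inj_on ind (Pow {..<n})"
  proof (rule inj_onI)
    fix S T assume "ind S = ind T"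
    then have "\<And>i. (i \<in> S) = (i \<in> T)" unfolding ind_def by (metis one_neq_zero)
    then show "S = T" by blast
  qed
  have cind: "c (ind T) = coefT T" if "T \<subseteq> {..<n}" for T
  proof -
    have "{i. ind T i = 1} = T" by (auto simp: ind_def)
    then show ?thesis using that by (auto simp: c_def)
  qed
  have "poly_deg_le n n p"
    unfolding poly_deg_le_def
  proof (intro exI allI)
    fix y :: "nat \<Rightarrow> real"
    have "p y = (\<Sum>S\<in>Pow {..<n}. of_bool (f S) * (\<Sum>T\<in>Pow {..<n}. ((\<Prod>i\<in>T. B S i) * (\<Prod>i\<in>{..<n}-T. A S i)) * (\<Prod>i<n. y i ^ ind T i)))"
      unfolding p_def
    proof (rule sum.cong)
      fix S assume "S \<in> Pow {..<n}"
      have "(\<Prod>i<n. B S i * y i + A S i) = (\<Sum>T\<in>Pow {..<n}. (\<Prod>i\<in>T. B S i * y i) * (\<Prod>i\<in>{..<n}-T. A S i))"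
        by (rule prod_add) simp
      also have "\<dots> = (\<Sum>T\<in>Pow {..<n}. ((\<Prod>i\<in>T. B S i) * (\<Prod>i\<in>{..<n}-T. A S i)) * (\<Prod>i<n. y i ^ ind T i))"
        by (intro sum.cong) (auto simp: prod.distrib mono_ind[symmetric])
      finally show "of_bool (f S) * (\<Prod>i<n. A S i + B S i * y i) = of_bool (f S) * (\<Sum>T\<in>Pow {..<n}. ((\<Prod>i\<in>T. B S i) * (\<Prod>i\<in>{..<n}-T. A S i)) * (\<Prod>i<n. y i ^ ind T i))"
        by (simp add: add.commute)
    qed simp
    also have "\<dots> = (\<Sum>S\<in>Pow {..<n}. \<Sum>T\<in>Pow {..<n}. of_bool (f S) * ((\<Prod>i\<in>T. B S i) * (\<Prod>i\<in>{..<n}-T. A S i)) * (\<Prod>i<n. y i ^ ind T i))"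
      by (simp add: sum_distrib_left mult.assoc)
    also have "\<dots> = (\<Sum>T\<in>Pow {..<n}. \<Sum>S\<in>Pow {..<n}. of_bool (f S) * ((\<Prod>i\<in>T. B S i) * (\<Prod>i\<in>{..<n}-T. A S i)) * (\<Prod>i<n. y i ^ ind T i))"
      by (rule sum.swap)
    also have "\<dots> = (\<Sum>T\<in>Pow {..<n}. coefT T * (\<Prod>i<n. y i ^ ind T i))"
      by (simp only: coefT_def sum_distrib_right)
    also have "\<dots> = (\<Sum>T\<in>Pow {..<n}. c (ind T) * (\<Prod>i<n. y i ^ ind T i))"
      by (intro sum.cong) (auto simp: cind)
    also have "\<dots> = (\<Sum>\<alpha>\<in>ind ` Pow {..<n}. c \<alpha> * (\<Prod>i<n. y i ^ \<alpha> i))"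
      by (rule sum.reindex[OF inj, symmetric, unfolded o_def])
    also have "\<dots> = (\<Sum>\<alpha>\<in>exps n n. c \<alpha> * (\<Prod>i<n. y i ^ \<alpha> i))"
      by (rule sum.mono_neutral_left) (auto simp: exps_finite ind_exps c_def)
    finally show "p y = (\<Sum>\<alpha>\<in>exps n n. c \<alpha> * (\<Prod>i<n. y i ^ \<alpha> i))" .
  qed
  moreover have "approximates n (1/3) f p"
    unfolding approximates_def
  proof
    fix x assume x: "x \<in> cube n"
    then have xs: "x \<subseteq> {..<n}" by (auto simp: cube_def)
    have "(\<Prod>i<n. A S i + B S i * embed x i) = (if S = x then 1 else 0)" if S: "S \<subseteq> {..<n}" for S
    proof (cases "S = x")
      case True
      then show ?thesis by (auto simp: A_def B_def embed_def intro!: prod.neutral)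
    next
      case False
      then obtain i where i: "i \<in> S \<and> i \<notin> x \<or> i \<in> x \<and> i \<notin> S" by blast
      then have "i < n" using S xs by auto
      moreover have "A S i + B S i * embed x i = 0" using i by (auto simp: A_def B_def embed_def)
      ultimately show ?thesis using False by (intro trans[OF prod_zero]) auto
    qed
    then have "p (embed x) = (\<Sum>S\<in>Pow {..<n}. if S = x then of_bool (f S) else 0)"
      unfolding p_def by (intro sum.cong) auto
    also have "\<dots> = of_bool (f x)" using xs by (simp add: sum.delta')
    finally show "\<bar>of_bool (f x) - p (embed x)\<bar> \<le> 1/3" by simp
  qed
  ultimately show ?thesis by blast
qed

lemma approx_deg_spec: "\<exists>p. poly_deg_le n (approx_deg n f) p \<and> approximates n (1/3) f p"
proof -
  have ex: "\<exists>d p. poly_deg_le n d p \<and> approximates n (1/3) f p" using approx_exists[of n f] by blast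
  show ?thesis unfolding approx_deg_def by (rule LeastI_ex[OF ex])
qed

lemma lbs_bound:
  assumes R: "\<forall>i<t. R i \<subseteq> {0..<n}" and disj: "\<forall>i<t. \<forall>j<t. i \<noteq> j \<longrightarrow> R i \<inter> R j = {}"
    and sens: "\<forall>i<t. f x \<noteq> f (flip x (R i))"
  shows "t \<le> n"
proof -
  have ne: "R i \<noteq> {}" if "i < t" for i
  proof
    assume "R i = {}"
    then have "flip x (R i) = x" by (simp add: flip_def)
    then show False using sens that by auto
  qed
  define g where "g i = (SOME k. k \<in> R i)" for i
  have g: "g i \<in> R i" if "i < t" for i unfolding g_def using ne[OF that] by (simp add: some_in_eq)
  have "inj_on g {..<t}"
  proof (rule inj_onI)
    fix i j assume ij: "i \<in> {..<t}" "j \<in> {..<t}" "g i = g j"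
    show "i = j"
    proof (rule ccontr)
      assume "i \<noteq> j"
      then have "R i \<inter> R j = {}" using disj ij by auto
      moreover have "g i \<in> R i" "g j \<in> R j" using g ij(1,2) by auto
      ultimately show False using ij(3) by auto
    qed
  qed
  moreover have "g ` {..<t} \<subseteq> {0..<n}"
  proof (rule image_subsetI)
    fix i assume "i \<in> {..<t}"
    then have "g i \<in> R i" "R i \<subseteq> {0..<n}" using g R by auto
    then show "g i \<in> {0..<n}" by blast
  qed
  ultimately have "card {..<t} \<le> card {0..<n}" by (intro card_inj_on_le) auto
  then show ?thesis by simp
qed

lemma local_bs_attained:
  "\<exists>R :: nat \<Rightarrow> nat set. (\<forall>i<local_bs n f x. R i \<subseteq> {0..<n}) \<and>
      (\<forall>i<local_bs n f x. \<forall>j<local_bs n f x. i \<noteq> j \<longrightarrow> R i \<inter> R j = {}) \<and>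
      (\<forall>i<local_bs n f x. f x \<noteq> f (flip x (R i)))"
proof -
  let ?T = "{t. \<exists>R :: nat \<Rightarrow> nat set. (\<forall>i<t. R i \<subseteq> {0..<n}) \<and>
      (\<forall>i<t. \<forall>j<t. i \<noteq> j \<longrightarrow> R i \<inter> R j = {}) \<and> (\<forall>i<t. f x \<noteq> f (flip x (R i)))}"
  have "?T \<subseteq> {..n}"
  proof (rule subsetI)
    fix t assume "t \<in> ?T"
    then obtain R :: "nat \<Rightarrow> nat set" where "(\<forall>i<t. R i \<subseteq> {0..<n})" "(\<forall>i<t. \<forall>j<t. i \<noteq> j \<longrightarrow> R i \<inter> R j = {})"
      "(\<forall>i<t. f x \<noteq> f (flip x (R i)))" by blast
    then have "t \<le> n" by (rule lbs_bound)
    then show "t \<in> {..n}" by simp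
  qed
  then have "finite ?T" by (rule finite_subset) simp
  moreover have "0 \<in> ?T" by simp
  ultimately have "Max ?T \<in> ?T" by (intro Max_in) blast+
  then have "local_bs n f x \<in> ?T" unfolding local_bs_def .
  then show ?thesis unfolding mem_Collect_eq .
qed

lemma bs_attained: "\<exists>x\<in>cube n. bs n f = local_bs n f x"
proof -
  have "finite (cube n)" by (simp add: cube_def)
  moreover have "{} \<in> cube n" by (simp add: cube_def)
  ultimately have "Max (local_bs n f ` cube n) \<in> local_bs n f ` cube n" by (intro Max_in) auto
  then show ?thesis unfolding bs_def by auto
qed

lemma abs_ob:
  assumes "\<bar>of_bool P - (v::real)\<bar> \<le> 1/3"
  shows "(P \<longrightarrow> 2/3 \<le> v) \<and> (\<not> P \<longrightarrow> v \<le> 1/3)"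
proof -
  have "of_bool P - v \<le> 1/3" "- (of_bool P - v) \<le> 1/3"
    using abs_le_D1[OF assms] abs_le_D2[OF assms] by auto
  then show ?thesis by (cases P) auto
qed

lemma key:
  fixes p :: "(nat \<Rightarrow> real) \<Rightarrow> real"
  assumes x: "x \<subseteq> {..<n}" and Rs: "\<And>j. j < b \<Longrightarrow> Rs j \<subseteq> {..<n}"
    and disj: "\<And>i j. i < b \<Longrightarrow> j < b \<Longrightarrow> i \<noteq> j \<Longrightarrow> Rs i \<inter> Rs j = {}"
    and sens: "\<And>j. j < b \<Longrightarrow> f x \<noteq> f (flip x (Rs j))"
    and pd: "poly_deg_le n d p" and ap: "approximates n (1/3) f p"
  shows "real b \<le> 4 * real d ^ 2"
proof -
  obtain c where c: "\<And>y. p y = (\<Sum>\<alpha>\<in>exps n d. c \<alpha> * (\<Prod>i<n. y i ^ \<alpha> i))"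
    using pd unfolding poly_deg_le_def by blast
  define v where "v S = p (embed (flip x (\<Union>j\<in>S. Rs j)))" for S
  obtain R where R: "degree R \<le> d" "\<And>t. poly R t = (\<Sum>S\<in>Pow {..<b}. t ^ card S * (1 - t) ^ (b - card S) * v S)"
  proof -
    have "\<exists>R. degree R \<le> d \<and> (\<forall>t. poly R t = (\<Sum>S\<in>Pow {..<b}. t ^ card S * (1 - t) ^ (b - card S) *
            p (embed (flip x (\<Union>j\<in>S. Rs j)))))"
      by (rule block_poly[where E="exps n d" and c=c and Rs=Rs and b=b and n=n])
        (use Rs disj c in \<open>auto simp: exps_def\<close>)
    then show ?thesis using that unfolding v_def by blast
  qed
  have vb: "\<bar>of_bool (f (flip x (\<Union>j\<in>S. Rs j))) - v S\<bar> \<le> 1/3" if S: "S \<subseteq> {..<b}" for S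
  proof -
    have "(\<Union>j\<in>S. Rs j) \<subseteq> {..<n}" using Rs S by blast
    then have "flip x (\<Union>j\<in>S. Rs j) \<in> cube n"
      using x by (auto simp: cube_def flip_def)
    then show ?thesis using ap unfolding approximates_def v_def by blast
  qed
  have vr: "-1/3 \<le> v S \<and> v S \<le> 4/3" if S: "S \<subseteq> {..<b}" for S
  proof -
    have h: "of_bool (f (flip x (\<Union>j\<in>S. Rs j))) - v S \<le> 1/3" "- (of_bool (f (flip x (\<Union>j\<in>S. Rs j))) - v S) \<le> 1/3"
      using abs_le_D1[OF vb[OF S]] abs_le_D2[OF vb[OF S]] by auto
    have "0 \<le> (of_bool (f (flip x (\<Union>j\<in>S. Rs j))) :: real)" "(of_bool (f (flip x (\<Union>j\<in>S. Rs j))) :: real) \<le> 1" by auto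
    then show ?thesis using h by linarith
  qed
  have bnd: "-1/3 \<le> poly R t \<and> poly R t \<le> 4/3" if t: "0 \<le> t" "t \<le> 1" for t
  proof -
    have w: "0 \<le> t ^ card S * (1 - t) ^ (b - card S)" for S using t by simp
    have "(\<Sum>S\<in>Pow {..<b}. t ^ card S * (1 - t) ^ (b - card S) * (-1/3)) \<le> (\<Sum>S\<in>Pow {..<b}. t ^ card S * (1 - t) ^ (b - card S) * v S)"
    proof (rule sum_mono)
      fix S assume "S \<in> Pow {..<b}"
      then have "-1/3 \<le> v S" using vr by blast
      then show "t ^ card S * (1 - t) ^ (b - card S) * (-1/3) \<le> t ^ card S * (1 - t) ^ (b - card S) * v S"
        using w[of S] by (rule mult_left_mono)
    qed
    moreover have "(\<Sum>S\<in>Pow {..<b}. t ^ card S * (1 - t) ^ (b - card S) * v S) \<le> (\<Sum>S\<in>Pow {..<b}. t ^ card S * (1 - t) ^ (b - card S) * (4/3))"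
    proof (rule sum_mono)
      fix S assume "S \<in> Pow {..<b}"
      then have "v S \<le> 4/3" using vr by blast
      then show "t ^ card S * (1 - t) ^ (b - card S) * v S \<le> t ^ card S * (1 - t) ^ (b - card S) * (4/3)"
        using w[of S] by (rule mult_left_mono)
    qed
    moreover have "poly R t = (\<Sum>S\<in>Pow {..<b}. t ^ card S * (1 - t) ^ (b - card S) * v S)" by (rule R(2))
    moreover have "(\<Sum>S\<in>Pow {..<b}. t ^ card S * (1 - t) ^ (b - card S) * (-1/3)) = (\<Sum>S\<in>Pow {..<b}. t ^ card S * (1 - t) ^ (b - card S)) * (-1/3)"
      by (rule sum_distrib_right[symmetric])
    moreover have "(\<Sum>S\<in>Pow {..<b}. t ^ card S * (1 - t) ^ (b - card S) * (4/3)) = (\<Sum>S\<in>Pow {..<b}. t ^ card S * (1 - t) ^ (b - card S)) * (4/3)"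
      by (rule sum_distrib_right[symmetric])
    ultimately show ?thesis using weights_sum[of t b] by linarith
  qed
  have p0: "poly R 0 = v {}" and c1: "coeff R 1 = (\<Sum>j<b. v {j}) - real b * v {}"
    using sym_props[of R b v] R(2) by auto
  have v0: "\<bar>of_bool (f x) - v {}\<bar> \<le> 1/3" using vb[of "{}"] by (simp add: flip_def)
  have vj: "\<bar>of_bool (f (flip x (Rs j))) - v {j}\<bar> \<le> 1/3" if "j < b" for j
    using vb[of "{j}"] that by simp
  obtain R' where R': "degree R' \<le> d" "\<And>t. 0 \<le> t \<Longrightarrow> t \<le> 1 \<Longrightarrow> -1/3 \<le> poly R' t \<and> poly R' t \<le> 4/3"
    "poly R' 0 \<le> 1/3" "real b * (2/3 - poly R' 0) \<le> coeff R' 1"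
  proof (cases "f x")
    case False
    have "v {j} \<ge> 2/3" if "j < b" for j using abs_ob[OF vj[OF that]] sens[OF that] False by auto
    then have "(\<Sum>j<b. 2/3) \<le> (\<Sum>j<b. v {j})" by (intro sum_mono) auto
    then have "real b * (2/3 - poly R 0) \<le> coeff R 1" using c1 p0 by (simp add: algebra_simps)
    moreover have "poly R 0 \<le> 1/3" using abs_ob[OF v0] False p0 by auto
    ultimately show ?thesis using that[of R] R(1) bnd by blast
  next
    case True
    define R' where "R' = 1 - R"
    have pR': "poly R' t = 1 - poly R t" for t by (simp add: R'_def)
    have cR': "coeff R' 1 = - coeff R 1" by (simp add: R'_def)
    have dR': "degree R' \<le> d" unfolding R'_def
      using degree_diff_le[of 1 d R] R(1) by simp
    have "v {j} \<le> 1/3" if "j < b" for j using abs_ob[OF vj[OF that]] sens[OF that] True by auto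
    then have "(\<Sum>j<b. v {j}) \<le> (\<Sum>j<b. 1/3)" by (intro sum_mono) auto
    then have s: "(\<Sum>j<b. v {j}) \<le> real b / 3" by simp
    have ce: "coeff R' 1 = real b * v {} - (\<Sum>j<b. v {j})" using cR' c1 by linarith
    have "real b * (2/3 - poly R' 0) = real b * v {} - real b / 3" unfolding pR' p0 by (simp add: algebra_simps)
    then have "real b * (2/3 - poly R' 0) \<le> coeff R' 1" using s ce by linarith
    moreover have "poly R' 0 \<le> 1/3" using abs_ob[OF v0] True p0 by (auto simp: pR')
    moreover have "-1/3 \<le> poly R' t \<and> poly R' t \<le> 4/3" if "0 \<le> t" "t \<le> 1" for t
      using bnd[OF that] by (simp add: pR')
    ultimately show ?thesis using that[of R'] dR' by blast
  qed
  have r0: "-1/3 \<le> poly R' 0" using R'(2)[of 0] by simp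
  show ?thesis
  proof (cases "d = 0")
    case True
    then have "coeff R' 1 = 0" using R'(1) by (intro coeff_eq_0) auto
    then have "real b * (2/3 - poly R' 0) \<le> 0" using R'(4) by simp
    moreover have "2/3 - poly R' 0 > 0" using R'(3) by simp
    ultimately have "real b \<le> 0" by (simp add: mult_le_0_iff)
    then show ?thesis by simp
  next
    case False
    then have d1: "1 \<le> d" by simp
    have m: "coeff R' 1 \<le> 5/3 * real d ^ 2 - (\<Sum>k\<in>{1..d}. 1 / tau d k) * (poly R' 0 + 1/3)"
      by (rule markov_refined[OF d1 R'(1) R'(2)])
    have W: "(\<Sum>k\<in>{1..d}. 1 / tau d k) \<ge> real d ^ 2 / 2" by (rule W_bound[OF d1])
    have "real d ^ 2 / 2 * (poly R' 0 + 1/3) \<le> (\<Sum>k\<in>{1..d}. 1 / tau d k) * (poly R' 0 + 1/3)"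
      using W r0 by (intro mult_right_mono) auto
    then have "real b * (2/3 - poly R' 0) \<le> 5/3 * real d ^ 2 - real d ^ 2 / 2 * (poly R' 0 + 1/3)"
      using m R'(4) by linarith
    also have "\<dots> \<le> 4 * real d ^ 2 * (2/3 - poly R' 0)"
    proof -
      have "0 \<le> real d ^ 2 * (7/6 - 7/2 * poly R' 0)" using R'(3) by (intro mult_nonneg_nonneg) auto
      moreover have "4 * real d ^ 2 * (2/3 - poly R' 0) - (5/3 * real d ^ 2 - real d ^ 2 / 2 * (poly R' 0 + 1/3))
          = real d ^ 2 * (7/6 - 7/2 * poly R' 0)" by (simp add: algebra_simps)
      ultimately show ?thesis by linarith
    qed
    finally have "real b * (2/3 - poly R' 0) \<le> 4 * real d ^ 2 * (2/3 - poly R' 0)" .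
    moreover have "2/3 - poly R' 0 > 0" using R'(3) by simp
    ultimately show ?thesis by (rule mult_right_le_imp_le)
  qed
qed

theorem theorem2:
  fixes n :: nat and f :: "nat set \<Rightarrow> bool"
  assumes "n \<ge> 1"
  shows "real (approx_deg n f) ^ 2 \<ge> sqrt (6 / 101) * real (bs n f)"
proof -
  obtain x where x: "x \<in> cube n" "bs n f = local_bs n f x" using bs_attained by blast
  obtain Rs where Rs: "\<forall>i<bs n f. Rs i \<subseteq> {0..<n}"
      "\<forall>i<bs n f. \<forall>j<bs n f. i \<noteq> j \<longrightarrow> Rs i \<inter> Rs j = {}"
      "\<forall>i<bs n f. f x \<noteq> f (flip x (Rs i))"
    using local_bs_attained[of n f x] unfolding x(2)[symmetric] by blast
  obtain p where p: "poly_deg_le n (approx_deg n f) p" "approximates n (1/3) f p"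
    using approx_deg_spec by blast
  have "real (bs n f) \<le> 4 * real (approx_deg n f) ^ 2"
  proof (rule key[where x=x and Rs=Rs and b="bs n f", OF _ _ _ _ p])
    show "x \<subseteq> {..<n}" using x by (auto simp: cube_def)
    show "\<And>j. j < bs n f \<Longrightarrow> Rs j \<subseteq> {..<n}" using Rs(1) by (simp add: atLeast0LessThan)
    show "\<And>i j. i < bs n f \<Longrightarrow> j < bs n f \<Longrightarrow> i \<noteq> j \<Longrightarrow> Rs i \<inter> Rs j = {}" using Rs(2) by auto
    show "\<And>j. j < bs n f \<Longrightarrow> f x \<noteq> f (flip x (Rs j))" using Rs(3) by auto
  qed
  moreover have "sqrt (6 / 101) \<le> 1/4"
  proof -
    have "sqrt (6 / 101) \<le> sqrt ((1/4)^2)" by (rule real_sqrt_le_mono) (simp add: power2_eq_square)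
    then show ?thesis by simp
  qed
  ultimately have "sqrt (6 / 101) * real (bs n f) \<le> 1/4 * (4 * real (approx_deg n f) ^ 2)"
    by (intro mult_mono) auto
  then show ?thesis by simp
qed

end
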